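(* Let $i\in\{0,\dots,t-1\}$ and let $i(0),\dots,i(\lg t-1)\in\{0,1\}$ be such that $i=\sum_{k}i(k)\cdot 2^k$. Let $\mathcal Y_i=\{y^{i(k),i(\ell)}_{k,\ell} : 0\le k\le\ell\le\lg t-1\}$, where $y^{i(k),i(\ell)}_{k,\ell}$ is taken to be the empty item (weight and profit $0$) if $i(k)=i(\ell)=0$. Then $p(\mathcal Y_i)=w(\mathcal Y_i)+\left(\binom{i+1}{2}-\frac{i}{3}\right)\cdot 9nB$.
   Context: $n\ge1$ and $B$ are positive integers (in the paper $B=B_n+nX$ with $B_n=\sum_{j=1}^{3n}(3n+1)^j$, $X=3tnB_n$). Let $t$ be a power of two, $\lg$ the base-2 logarithm, $Y=3t^2nB$, and fix a bijection $f:\{0,\dots,\lg t-1\}^2\to\{0,\dots,(\lg t)^2-1\}$. Quadratization items: for each $0\le k<\ell\le\lg t-1$, items $y^{1,0}_{k,\ell}$ with $w=p=3^{f(k,\ell)}Y$; $y^{0,1}_{k,\ell}$ with $w=p=3^{f(\ell,k)}Y$; and $y^{1,1}_{k,\ell}$ with $w=(3^{f(k,\ell)}+3^{f(\ell,k)})Y$ and $p=(3^{f(k,\ell)}+3^{f(\ell,k)})Y+2^{k+\ell}\cdot 9nB$; and for each $0\le k\le\lg t-1$ an item $y^{1,1}_{k,k}$ with $w=3^{f(k,k)}Y$ and $p=3^{f(k,k)}Y+2^{2k}\cdot 4.5nB+2^k\cdot 1.5nB$. For a set $\mathcal S$ of items, $w(\mathcal S)=\sum_{x\in\mathcal S}w(x)$,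 $p(\mathcal S)=\sum_{x\in\mathcal S}p(x)$. *)

theory Defs
  imports Main "HOL.Real"
begin

text \<open>Parameters: n, B (positive integers), L = lg t (so t = 2^L), and the bijection
  f from {0..L-1}^2 onto {0..L^2-1}.  An item y^{a,b}_{k,l} is identified by its label
  (a, b, k, l).  Labels that do not denote an item of the construction, and the
  "empty item" y^{0,0}_{k,l}, get weight and profit 0.\<close>

definition quadY :: "nat \<Rightarrow> nat \<Rightarrow> nat \<Rightarrow> real" where
  "quadY n B L = 3 * (2 ^ L) ^ 2 * real n * real B"

definition item_w :: "nat \<Rightarrow> nat \<Rightarrow> nat \<Rightarrow> (nat \<times> nat \<Rightarrow> nat) \<Rightarrow> nat \<times> nat \<times> nat \<times> nat \<Rightarrow> real" where
  "item_w n B L f x = (case x of (a, b, k, l) \<Rightarrow>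
     if k < l \<and> l < L \<and> a = 1 \<and> b = 0 then 3 ^ f (k, l) * quadY n B L
     else if k < l \<and> l < L \<and> a = 0 \<and> b = 1 then 3 ^ f (l, k) * quadY n B L
     else if k < l \<and> l < L \<and> a = 1 \<and> b = 1 then (3 ^ f (k, l) + 3 ^ f (l, k)) * quadY n B L
     else if k = l \<and> l < L \<and> a = 1 \<and> b = 1 then 3 ^ f (k, k) * quadY n B L
     else 0)"

definition item_p :: "nat \<Rightarrow> nat \<Rightarrow> nat \<Rightarrow> (nat \<times> nat \<Rightarrow> nat) \<Rightarrow> nat \<times> nat \<times> nat \<times> nat \<Rightarrow> real" where
  "item_p n B L f x = (case x of (a, b, k, l) \<Rightarrow>
     if k < l \<and> l < L \<and> a = 1 \<and> b = 0 then 3 ^ f (k, l) * quadY n B L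
     else if k < l \<and> l < L \<and> a = 0 \<and> b = 1 then 3 ^ f (l, k) * quadY n B L
     else if k < l \<and> l < L \<and> a = 1 \<and> b = 1 then
       (3 ^ f (k, l) + 3 ^ f (l, k)) * quadY n B L + 2 ^ (k + l) * 9 * real n * real B
     else if k = l \<and> l < L \<and> a = 1 \<and> b = 1 then
       3 ^ f (k, k) * quadY n B L + 2 ^ (2 * k) * 4.5 * real n * real B + 2 ^ k * 1.5 * real n * real B
     else 0)"

definition set_w where "set_w n B L f S = (\<Sum>x\<in>S. item_w n B L f x)"
definition set_p where "set_p n B L f S = (\<Sum>x\<in>S. item_p n B L f x)"

definition Yset :: "nat \<Rightarrow> (nat \<Rightarrow> nat) \<Rightarrow> (nat \<times> nat \<times> nat \<times> nat) set" where
  "Yset L ib = {(ib k, ib l, k, l) | k l. k \<le> l \<and> l < L}"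

end

theory Submission
  imports Defs
begin

definition gg :: "(nat \<Rightarrow> nat) \<Rightarrow> nat \<Rightarrow> nat \<Rightarrow> real" where
  "gg ib l k = (if k < l then real (ib k) * real (ib l) * 2 ^ (k + l) * 9
     else real (ib k) * (2 ^ (2 * k) * 4.5 + 2 ^ k * 1.5))"

lemma ident:
  assumes "\<forall>k<L. ib k \<in> {0, 1::nat}"
  shows "(\<Sum>l<L. \<Sum>k\<le>l. gg ib l k)
     = ((real (\<Sum>k<L. ib k * 2 ^ k))^2 / 2 + real (\<Sum>k<L. ib k * 2 ^ k) / 6) * 9"
  using assms
proof (induction L)
  case 0
  then show ?case by simp
next
  case (Suc L)
  define I where "I = real (\<Sum>k<L. ib k * 2 ^ k)"
  have IH: "(\<Sum>l<L. \<Sum>k\<le>l. gg ib l k) = (I^2/2 + I/6) * 9"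
    using Suc by (simp add: I_def)
  have bL: "real (ib L) * real (ib L) = real (ib L)"
    using Suc.prems by auto
  have s1: "(\<Sum>k<L. gg ib L k) = real (ib L) * 2 ^ L * I * 9"
  proof -
    have "(\<Sum>k<L. gg ib L k) = (\<Sum>k<L. real (ib L) * 2 ^ L * 9 * (real (ib k) * 2 ^ k))"
      by (rule sum.cong) (auto simp: gg_def power_add)
    also have "\<dots> = real (ib L) * 2 ^ L * 9 * I"
      by (simp add: I_def sum_distrib_left[symmetric])
    finally show ?thesis by simp
  qed
  have "(\<Sum>k\<le>L. gg ib L k) = (\<Sum>k<L. gg ib L k) + gg ib L L"
    by (simp add: lessThan_Suc_atMost[symmetric])
  also have "\<dots> = real (ib L) * 2 ^ L * I * 9 + real (ib L) * (2 ^ (2 * L) * 4.5 + 2 ^ L * 1.5)"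
    using s1 by (simp add: gg_def)
  finally have s2: "(\<Sum>k\<le>L. gg ib L k) = real (ib L) * 2 ^ L * I * 9 + real (ib L) * (2 ^ (2 * L) * 4.5 + 2 ^ L * 1.5)" .
  have newI: "real (\<Sum>k<Suc L. ib k * 2 ^ k) = I + real (ib L) * 2 ^ L"
    by (simp add: I_def)
  have p2: "(2::real) ^ (2 * L) = 2 ^ L * 2 ^ L"
    by (simp add: power_mult_distrib mult_2 power_add)
  have "(\<Sum>l<Suc L. \<Sum>k\<le>l. gg ib l k) = (I^2/2 + I/6) * 9 + (real (ib L) * 2 ^ L * I * 9 + real (ib L) * (2 ^ (2 * L) * 4.5 + 2 ^ L * 1.5))"
    using IH s2 by simp
  also have "\<dots> = ((I + real (ib L) * 2 ^ L)^2 / 2 + (I + real (ib L) * 2 ^ L) / 6) * 9"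
  proof -
    have "(I + real (ib L) * 2 ^ L)^2 = I^2 + 2 * I * real (ib L) * 2 ^ L + (real (ib L) * real (ib L)) * (2 ^ L * 2 ^ L)"
      by (simp add: power2_eq_square algebra_simps)
    then show ?thesis using bL p2 by (simp add: field_simps)
  qed
  finally show ?case using newI by simp
qed

theorem lemma4:
  fixes n B L i :: nat and t :: nat and f :: "nat \<times> nat \<Rightarrow> nat" and ib :: "nat \<Rightarrow> nat"
  assumes "n \<ge> 1" and "B \<ge> 1"
    and "t = 2 ^ L"
    and "bij_betw f ({0..<L} \<times> {0..<L}) {0..<L ^ 2}"
    and "i < t"
    and "\<forall>k<L. ib k \<in> {0, 1}"
    and "i = (\<Sum>k<L. ib k * 2 ^ k)"
  shows "set_p n B L f (Yset L ib)
       = set_w n B L f (Yset L ib) + (real ((i + 1) choose 2) - real i / 3) * 9 * real n * real B"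
proof -
  define h where "h = (\<lambda>(l, k). (ib k, ib l, k, l))"
  have Y: "Yset L ib = h ` (SIGMA l:{..<L}. {..l})"
    unfolding Yset_def h_def by force
  have inj: "inj_on h (SIGMA l:{..<L}. {..l})"
    unfolding h_def inj_on_def by auto
  have D: "item_p n B L f (h (l, k)) - item_w n B L f (h (l, k)) = gg ib l k * (real n * real B)"
    if "l < L" "k \<le> l" for l k
  proof -
    have "ib k \<in> {0,1}" "ib l \<in> {0,1}" using assms(6) that by auto
    then show ?thesis using that
      by (auto simp: h_def item_p_def item_w_def gg_def algebra_simps)
  qed
  have "set_p n B L f (Yset L ib) - set_w n B L f (Yset L ib)
      = (\<Sum>x\<in>Yset L ib. item_p n B L f x - item_w n B L f x)"
    by (simp add: set_p_def set_w_def sum_subtractf)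
  also have "\<dots> = (\<Sum>x\<in>(SIGMA l:{..<L}. {..l}). item_p n B L f (h x) - item_w n B L f (h x))"
    unfolding Y by (simp add: sum.reindex[OF inj])
  also have "\<dots> = (\<Sum>l<L. \<Sum>k\<le>l. item_p n B L f (h (l, k)) - item_w n B L f (h (l, k)))"
    by (simp add: sum.Sigma)
  also have "\<dots> = (\<Sum>l<L. \<Sum>k\<le>l. gg ib l k * (real n * real B))"
    by (intro sum.cong refl) (simp add: D)
  also have "\<dots> = (\<Sum>l<L. \<Sum>k\<le>l. gg ib l k) * (real n * real B)"
    by (simp add: sum_distrib_right)
  also have "\<dots> = ((real i)^2 / 2 + real i / 6) * 9 * (real n * real B)"
    using ident[OF assms(6)] assms(7) by simp
  also have "\<dots> = (real ((i + 1) choose 2) - real i / 3) * 9 * real n * real B"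
  proof -
    have "real ((i + 1) choose 2) = real i * (real i + 1) / 2"
    proof (induction i)
      case 0 then show ?case by simp
    next
      case (Suc m)
      have "Suc (Suc m) choose 2 = Suc m + (Suc m choose 2)"
        by (simp add: numeral_2_eq_2)
      then show ?case using Suc by (simp add: field_simps)
    qed
    moreover have "real i * (real i + 1) / 2 - real i / 3 = (real i)^2 / 2 + real i / 6"
      by (simp add: field_simps power2_eq_square)
    ultimately show ?thesis by simp
  qed
  finally show ?thesis by simp
qed

end
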